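(* Let $H:\mathbb{R}^n\rightrightarrows\mathbb{R}^n$ be a closed convex process such that $\mathcal{F}(H)^-\cap\operatorname{cl}(\mathcal{F}(H^+))=\{0\}$. If $V\in\mathcal{V}$ is a weak Lyapunov function for $H$, then $W:=(V|_{\mathcal{F}(H)})^\star$ is a strong Lyapunov function for $H^+$.
   Context: A set-valued map $H:\mathbb{R}^n\rightrightarrows\mathbb{R}^n$ is a convex process if its graph $\{(x,y)\mid y\in H(x)\}$ is a convex cone, and closed if the graph is closed. For a set-valued map $G$, a trajectory is a sequence $(x_k)_{k\ge0}$ with $x_{k+1}\in G(x_k)$ for all $k\ge0$, and $\mathcal{F}(G)$ is the set of $\xi$ such that some trajectory has $x_0=\xi$. The positive dual process is defined by $p\in H^+(q)\iff\langle p,x\rangle\le\langle q,y\rangle$ for all $(x,y)\in\operatorname{graph}(H)$. For a set $\mathcal{C}$, $\mathcal{C}^-=\{y\mid\langle x,y\rangle\le0\ \forall x\in\mathcal{C}\}$; $\operatorname{cl}$ denotes closure. $\mathcal{V}$ is the set of extended real-valued functions $f:\mathbb{R}^n\to\mathbb{R}\cup\{\pm\infty\}$ that are closed and convex (closed convex epigraph), positive semi-definite ($f(0)=0$, $f\ge0$) and positively homogeneous of degree 2 ($f(\lambda x)=\lambda^2f(x)$ for $\lambda\ge0$). For a convex cone $\mathcal{C}$, $f\in\mathcal{V}$ is positive definite with respect to $\mathcal{C}$ if there exist $0<\alpha\le\beta<\infty$ with $\alpha\|x\|^2\le f(x)\le\beta\|x\|^2$ for all $x\in\mathcal{C}$.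 $f|_{\mathcal{C}}(x)=f(x)$ if $x\in\mathcal{C}$ and $+\infty$ otherwise; $f^\star(y)=\sup_x\{y\cdot x-f(x)\}$ is the convex conjugate. For a convex process $G$: $V\in\mathcal{V}$ is a weak Lyapunov function for $G$ if $V$ is positive definite with respect to $\mathcal{F}(G)$ and there is $\gamma\in(0,1)$ such that for every $x\in\mathcal{F}(G)$ there exists $y\in\mathcal{F}(G)\cap G(x)$ with $V(y)\le\gamma V(x)$; $V\in\mathcal{V}$ is a strong Lyapunov function for $G$ if $V$ is positive definite with respect to $\mathcal{F}(G)$ and there is $\gamma\in(0,1)$ such that for every $x\in\mathcal{F}(G)$ and every $y\in\mathcal{F}(G)\cap G(x)$, $V(y)\le\gamma V(x)$. *)

theory Defs
  imports "HOL-Analysis.Analysis" "HOL-Library.Extended_Real"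
begin

type_synonym 'a setmap = "'a \<Rightarrow> 'a set"

definition graph_sv :: "'a setmap \<Rightarrow> ('a \<times> 'a) set" where
  "graph_sv H = {(x, y). y \<in> H x}"

definition convex_process :: "('a::euclidean_space) setmap \<Rightarrow> bool" where
  "convex_process H \<longleftrightarrow> convex_cone (graph_sv H)"

definition closed_convex_process :: "('a::euclidean_space) setmap \<Rightarrow> bool" where
  "closed_convex_process H \<longleftrightarrow> convex_process H \<and> closed (graph_sv H)"

definition feas :: "'a setmap \<Rightarrow> 'a set" where
  "feas G = {\<xi>. \<exists>x::nat \<Rightarrow> 'a. x 0 = \<xi> \<and> (\<forall>k. x (Suc k) \<in> G (x k))}"

definition pos_dual :: "('a::euclidean_space) setmap \<Rightarrow> 'a setmap" where
  "pos_dual H q = {p. \<forall>(x, y) \<in> graph_sv H. p \<bullet> x \<le> q \<bullet> y}"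

definition polar_cone :: "('a::euclidean_space) set \<Rightarrow> 'a set" where
  "polar_cone C = {y. \<forall>x\<in>C. x \<bullet> y \<le> 0}"

definition epi :: "('a::euclidean_space \<Rightarrow> ereal) \<Rightarrow> ('a \<times> real) set" where
  "epi f = {(x, t). f x \<le> ereal t}"

definition classV :: "('a::euclidean_space \<Rightarrow> ereal) set" where
  "classV = {f. closed (epi f) \<and> convex (epi f) \<and> f 0 = 0 \<and> (\<forall>x. f x \<ge> 0)
      \<and> (\<forall>x. \<forall>c::real. c \<ge> 0 \<longrightarrow> f (c *\<^sub>R x) = ereal (c\<^sup>2) * f x)}"

definition pos_def_wrt :: "('a::euclidean_space \<Rightarrow> ereal) \<Rightarrow> 'a set \<Rightarrow> bool" where
  "pos_def_wrt f C \<longleftrightarrow> (\<exists>\<alpha> \<beta>::real. 0 < \<alpha> \<and> \<alpha> \<le> \<beta> \<and>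
      (\<forall>x\<in>C. ereal (\<alpha> * (norm x)\<^sup>2) \<le> f x \<and> f x \<le> ereal (\<beta> * (norm x)\<^sup>2)))"

definition restrict_fun :: "('a \<Rightarrow> ereal) \<Rightarrow> 'a set \<Rightarrow> 'a \<Rightarrow> ereal" where
  "restrict_fun f C x = (if x \<in> C then f x else \<infinity>)"

definition conjugate :: "('a::euclidean_space \<Rightarrow> ereal) \<Rightarrow> 'a \<Rightarrow> ereal" where
  "conjugate f y = (SUP x. ereal (y \<bullet> x) - f x)"

definition weak_lyapunov :: "('a::euclidean_space \<Rightarrow> ereal) \<Rightarrow> 'a setmap \<Rightarrow> bool" where
  "weak_lyapunov V G \<longleftrightarrow> V \<in> classV \<and> pos_def_wrt V (feas G) \<and>
     (\<exists>\<gamma>::real. 0 < \<gamma> \<and> \<gamma> < 1 \<and>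
        (\<forall>x\<in>feas G. \<exists>y\<in>feas G \<inter> G x. V y \<le> ereal \<gamma> * V x))"

definition strong_lyapunov :: "('a::euclidean_space \<Rightarrow> ereal) \<Rightarrow> 'a setmap \<Rightarrow> bool" where
  "strong_lyapunov V G \<longleftrightarrow> V \<in> classV \<and> pos_def_wrt V (feas G) \<and>
     (\<exists>\<gamma>::real. 0 < \<gamma> \<and> \<gamma> < 1 \<and>
        (\<forall>x\<in>feas G. \<forall>y\<in>feas G \<inter> G x. V y \<le> ereal \<gamma> * V x))"

end

theory Submission
  imports Defs
begin

lemma feasI: "t 0 = x \<Longrightarrow> (\<And>k. t (Suc k) \<in> G (t k)) \<Longrightarrow> x \<in> feas G"
  unfolding feas_def by blast

lemma graph_cone:
  assumes "convex_process H" "y \<in> H x" "c \<ge> 0"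
  shows "c *\<^sub>R y \<in> H (c *\<^sub>R x)"
proof -
  have "conic (graph_sv H)" using assms(1) unfolding convex_process_def convex_cone_def by auto
  moreover have "(x, y) \<in> graph_sv H" using assms(2) by (simp add: graph_sv_def)
  ultimately have "c *\<^sub>R (x, y) \<in> graph_sv H" using assms(3) unfolding conic_def by blast
  then show ?thesis by (simp add: graph_sv_def)
qed

lemma feas_cone:
  assumes "convex_process H" "x \<in> feas H" "c \<ge> 0"
  shows "c *\<^sub>R x \<in> feas H"
proof -
  obtain t where t: "t 0 = x" "\<And>k. t (Suc k) \<in> H (t k)" using assms(2) unfolding feas_def by blast
  have "(\<lambda>k. c *\<^sub>R t k) 0 = c *\<^sub>R x \<and> (\<forall>k. (\<lambda>k. c *\<^sub>R t k) (Suc k) \<in> H ((\<lambda>k. c *\<^sub>R t k) k))"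
    using t graph_cone[OF assms(1) _ assms(3)] by auto
  then show ?thesis by (intro feasI[of "\<lambda>k. c *\<^sub>R t k"]) auto
qed

lemma feas_dual_cone:
  assumes "p \<in> feas (pos_dual H)" "c \<ge> 0"
  shows "c *\<^sub>R p \<in> feas (pos_dual H)"
proof -
  obtain t where t: "t 0 = p" "\<And>k. t (Suc k) \<in> pos_dual H (t k)" using assms(1) unfolding feas_def by blast
  have "c *\<^sub>R t (Suc k) \<in> pos_dual H (c *\<^sub>R t k)" for k
  proof -
    have "\<forall>(x, y) \<in> graph_sv H. t (Suc k) \<bullet> x \<le> t k \<bullet> y" using t(2)[of k] by (simp add: pos_dual_def)
    then have "\<forall>(x, y) \<in> graph_sv H. (c *\<^sub>R t (Suc k)) \<bullet> x \<le> (c *\<^sub>R t k) \<bullet> y"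
      using assms(2) by (auto simp: mult_left_mono)
    then show ?thesis by (simp add: pos_dual_def)
  qed
  then have "(\<lambda>k. c *\<^sub>R t k) 0 = c *\<^sub>R p \<and> (\<forall>k. (\<lambda>k. c *\<^sub>R t k) (Suc k) \<in> pos_dual H ((\<lambda>k. c *\<^sub>R t k) k))"
    using t by auto
  then show ?thesis by (intro feasI[of "\<lambda>k. c *\<^sub>R t k"]) auto
qed

lemma zero_feas:
  assumes "convex_process H" "polar_cone (feas H) \<inter> closure (feas (pos_dual H)) = {0}"
  shows "(0::'a::euclidean_space) \<in> feas H"
proof (cases "graph_sv H = {}")
  case True
  then have "pos_dual H q = UNIV" for q by (simp add: pos_dual_def)
  then have "feas (pos_dual H) = UNIV" unfolding feas_def by auto
  moreover have "feas H = {}" using True unfolding feas_def graph_sv_def by auto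
  ultimately have "(UNIV::'a set) = {0}" using assms(2) by (simp add: polar_cone_def)
  moreover obtain b :: 'a where "b \<in> Basis" using nonempty_Basis by blast
  ultimately show ?thesis by (metis UNIV_I nonzero_Basis singletonD)
next
  case False
  then obtain x y where "y \<in> H x" unfolding graph_sv_def by auto
  from graph_cone[OF assms(1) this, of 0] have "0 \<in> H 0" by simp
  then have "(\<lambda>k. 0::'a) 0 = 0 \<and> (\<forall>k. (\<lambda>k. 0::'a) (Suc k) \<in> H ((\<lambda>k. 0) k))" by simp
  then show ?thesis by (intro feasI[of "\<lambda>k. 0"]) auto
qed

lemma quad_bound:
  fixes a b c :: real
  assumes "a > 0"
  shows "b * c - a * c\<^sup>2 \<le> b\<^sup>2 / (4 * a)"
proof -
  have "b\<^sup>2 / (4 * a) - (b * c - a * c\<^sup>2) = (b - 2 * a * c)\<^sup>2 / (4 * a)"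
    using assms by (simp add: field_simps power2_eq_square)
  moreover have "(b - 2 * a * c)\<^sup>2 / (4 * a) \<ge> 0" using assms by simp
  ultimately show ?thesis by linarith
qed

lemma key_delta:
  fixes F G :: "'a::euclidean_space set"
  assumes F0: "0 \<in> F" and Fc: "\<And>x c. x \<in> F \<Longrightarrow> c \<ge> 0 \<Longrightarrow> c *\<^sub>R x \<in> F"
    and Gc: "\<And>p c. p \<in> G \<Longrightarrow> c \<ge> 0 \<Longrightarrow> c *\<^sub>R p \<in> G"
    and pol: "polar_cone F \<inter> closure G = {0}"
  shows "\<exists>\<delta>>0. \<forall>p\<in>G. \<exists>x\<in>F. norm x \<le> 1 \<and> \<delta> * norm p \<le> p \<bullet> x"
proof (rule ccontr)
  assume "\<not> ?thesis"
  then have h: "\<forall>n::nat. \<exists>p\<in>G. \<forall>x\<in>F. norm x \<le> 1 \<longrightarrow> p \<bullet> x < inverse (real (Suc n)) * norm p"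
    by (metis inverse_positive_iff_positive not_le of_nat_0_less_iff zero_less_Suc)
  have "\<exists>q. q \<in> G \<and> norm q = 1 \<and> (\<forall>x\<in>F. norm x \<le> 1 \<longrightarrow> q \<bullet> x < inverse (real (Suc n)))" for n
  proof -
    obtain p where p: "p \<in> G" "\<forall>x\<in>F. norm x \<le> 1 \<longrightarrow> p \<bullet> x < inverse (real (Suc n)) * norm p"
      using h by blast
    have "p \<noteq> 0" using p(2) F0 by fastforce
    define q where "q = inverse (norm p) *\<^sub>R p"
    have "q \<in> G" unfolding q_def using Gc p(1) by simp
    moreover have "norm q = 1" unfolding q_def using \<open>p \<noteq> 0\<close> by simp
    moreover have "q \<bullet> x < inverse (real (Suc n))" if "x \<in> F" "norm x \<le> 1" for x
    proof -
      have "p \<bullet> x < inverse (real (Suc n)) * norm p" using p(2) that by blast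
      then have "inverse (norm p) * (p \<bullet> x) < inverse (real (Suc n))"
        using \<open>p \<noteq> 0\<close> by (simp add: field_simps)
      then show ?thesis unfolding q_def by simp
    qed
    ultimately show ?thesis by blast
  qed
  then obtain q where q: "\<And>n. q n \<in> G" "\<And>n. norm (q n) = 1"
    "\<And>n x. x \<in> F \<Longrightarrow> norm x \<le> 1 \<Longrightarrow> q n \<bullet> x < inverse (real (Suc n))"
    by metis
  have "seq_compact (sphere (0::'a) 1)" by (simp add: compact_imp_seq_compact)
  moreover have "\<forall>n. q n \<in> sphere 0 1" using q(2) by simp
  ultimately obtain l r where lr: "l \<in> sphere 0 1" "strict_mono r" "(q \<circ> r) \<longlonglongrightarrow> l"
    by (metis seq_compactE)
  have "l \<in> closure G" unfolding closure_sequential using lr(3) q(1) by (metis comp_apply)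
  moreover have "l \<in> polar_cone F"
    unfolding polar_cone_def
  proof (intro CollectI ballI)
    fix x assume x: "x \<in> F"
    show "x \<bullet> l \<le> 0"
    proof (cases "x = 0")
      case True then show ?thesis by simp
    next
      case False
      define z where "z = inverse (norm x) *\<^sub>R x"
      have z: "z \<in> F" "norm z \<le> 1" unfolding z_def using Fc x False by auto
      have t1: "(\<lambda>n. (q \<circ> r) n \<bullet> z) \<longlonglongrightarrow> l \<bullet> z"
        using lr(3) unfolding comp_def by (intro tendsto_intros) auto
      have t2: "(\<lambda>n. inverse (real (Suc (r n)))) \<longlonglongrightarrow> 0"
        using LIMSEQ_subseq_LIMSEQ[OF LIMSEQ_inverse_real_of_nat lr(2)] by (simp add: comp_def)
      have "l \<bullet> z \<le> 0"
        by (rule LIMSEQ_le[OF t1 t2]) (use q(3)[OF z] in \<open>auto intro: less_imp_le\<close>)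
      then have "inverse (norm x) * (l \<bullet> x) \<le> 0" unfolding z_def by simp
      then have "l \<bullet> x \<le> 0" using False
        by (simp add: mult_le_0_iff)
      then show ?thesis by (simp add: inner_commute)
    qed
  qed
  ultimately have "l = 0" using pol by blast
  then show False using lr(1) by simp
qed

theorem theorem2:
  fixes H :: "('a::euclidean_space) setmap" and V :: "'a \<Rightarrow> ereal"
  assumes "closed_convex_process H"
    and "polar_cone (feas H) \<inter> closure (feas (pos_dual H)) = {0}"
    and "V \<in> classV"
    and "weak_lyapunov V H"
  shows "strong_lyapunov (conjugate (restrict_fun V (feas H))) (pos_dual H)"
proof -
  define F where "F = feas H"
  define G where "G = feas (pos_dual H)"
  define W where "W = conjugate (restrict_fun V F)"
  have cp: "convex_process H" using assms(1) by (simp add: closed_convex_process_def)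
  have F0: "0 \<in> F" unfolding F_def using zero_feas[OF cp assms(2)] .
  have Fc: "\<And>x c. x \<in> F \<Longrightarrow> c \<ge> 0 \<Longrightarrow> c *\<^sub>R x \<in> F" unfolding F_def using feas_cone[OF cp] by blast
  have Gc: "\<And>p c. p \<in> G \<Longrightarrow> c \<ge> 0 \<Longrightarrow> c *\<^sub>R p \<in> G" unfolding G_def using feas_dual_cone by blast
  obtain \<delta> where \<delta>: "\<delta> > 0" "\<And>p. p \<in> G \<Longrightarrow> \<exists>x\<in>F. norm x \<le> 1 \<and> \<delta> * norm p \<le> p \<bullet> x"
    using key_delta[OF F0 Fc Gc] assms(2) unfolding F_def G_def by blast
  obtain \<alpha> \<beta> where ab: "0 < \<alpha>" "\<alpha> \<le> \<beta>"
    "\<And>x. x \<in> F \<Longrightarrow> ereal (\<alpha> * (norm x)\<^sup>2) \<le> V x \<and> V x \<le> ereal (\<beta> * (norm x)\<^sup>2)"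
    using assms(4) unfolding weak_lyapunov_def pos_def_wrt_def F_def by blast
  obtain \<gamma> where g: "0 < \<gamma>" "\<gamma> < 1" "\<And>x. x \<in> F \<Longrightarrow> \<exists>y\<in>F \<inter> H x. V y \<le> ereal \<gamma> * V x"
    using assms(4) unfolding weak_lyapunov_def F_def by blast
  have V0: "V 0 = 0" and Vhom: "\<And>x c. c \<ge> 0 \<Longrightarrow> V (c *\<^sub>R x) = ereal (c\<^sup>2) * V x"
    using assms(3) unfolding classV_def by auto
  define v where "v x = real_of_ereal (V x)" for x
  have Vv: "V x = ereal (v x)" if "x \<in> F" for x
  proof -
    have "ereal (\<alpha> * (norm x)\<^sup>2) \<le> V x" "V x \<le> ereal (\<beta> * (norm x)\<^sup>2)" using ab(3)[OF that] by auto
    then show ?thesis unfolding v_def by (cases "V x") auto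
  qed
  have vb: "\<alpha> * (norm x)\<^sup>2 \<le> v x" "v x \<le> \<beta> * (norm x)\<^sup>2" if "x \<in> F" for x
    using ab(3)[OF that] Vv[OF that] by auto
  have vhom: "v (c *\<^sub>R x) = c\<^sup>2 * v x" if "x \<in> F" "c \<ge> 0" for x c
    using Vhom[OF that(2), of x] Vv[OF that(1)] Vv[OF Fc[OF that]] by simp
  have v0: "v 0 = 0" using V0 by (simp add: v_def)
  have W_upper: "ereal (p \<bullet> x - v x) \<le> W p" if "x \<in> F" for p x
    unfolding W_def conjugate_def
    by (rule SUP_upper2[of x]) (use that Vv[OF that] in \<open>auto simp: restrict_fun_def\<close>)
  have W_least: "W p \<le> ereal c" if "\<And>x. x \<in> F \<Longrightarrow> p \<bullet> x - v x \<le> c" for p c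
    unfolding W_def conjugate_def
  proof (rule SUP_least)
    fix x
    show "ereal (p \<bullet> x) - restrict_fun V F x \<le> ereal c"
    proof (cases "x \<in> F")
      case True then show ?thesis using that[OF True] Vv[OF True] by (simp add: restrict_fun_def)
    next
      case False then show ?thesis by (simp add: restrict_fun_def)
    qed
  qed
  have W_nonneg: "0 \<le> W p" for p using W_upper[OF F0, of p] v0 by (simp add: zero_ereal_def)
  have W_bound: "W p \<le> ereal ((norm p)\<^sup>2 / (4 * \<alpha>))" for p
  proof (rule W_least)
    fix x assume x: "x \<in> F"
    have "p \<bullet> x \<le> norm p * norm x" by (simp add: norm_cauchy_schwarz)
    then have "p \<bullet> x - v x \<le> norm p * norm x - \<alpha> * (norm x)\<^sup>2" using vb(1)[OF x] by linarith
    also have "\<dots> \<le> (norm p)\<^sup>2 / (4 * \<alpha>)" by (rule quad_bound[OF ab(1)])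
    finally show "p \<bullet> x - v x \<le> (norm p)\<^sup>2 / (4 * \<alpha>)" .
  qed
  define w where "w p = real_of_ereal (W p)" for p
  have Ww: "W p = ereal (w p)" for p
    using W_nonneg[of p] W_bound[of p] unfolding w_def by (cases "W p") auto
  have w_upper: "p \<bullet> x - v x \<le> w p" if "x \<in> F" for p x using W_upper[OF that, of p] Ww[of p] by simp
  have w_least: "w p \<le> c" if "\<And>x. x \<in> F \<Longrightarrow> p \<bullet> x - v x \<le> c" for p c
    using W_least[of p c] that Ww[of p] by simp
  have w_nonneg: "0 \<le> w p" for p using W_nonneg[of p] Ww[of p] by simp
  have w_bound: "w p \<le> (norm p)\<^sup>2 / (4 * \<alpha>)" for p using W_bound[of p] Ww[of p] by simp
  have v_nonneg: "0 \<le> v x" if "x \<in> F" for x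
    using vb(1)[OF that] ab(1) by (meson order_trans zero_le_mult_iff zero_le_power2 less_imp_le)
  have w0: "w 0 = 0"
    using w_least[of 0 0] v_nonneg w_nonneg[of 0] by (simp add: order_antisym)
  have whom: "w (c *\<^sub>R p) = c\<^sup>2 * w p" if c: "c \<ge> 0" for c p
  proof (cases "c = 0")
    case True then show ?thesis using w0 by simp
  next
    case False
    then have cpos: "c > 0" using c by simp
    have le1: "w (c *\<^sub>R p) \<le> c\<^sup>2 * w p"
    proof (rule w_least)
      fix x assume x: "x \<in> F"
      define z where "z = inverse c *\<^sub>R x"
      have z: "z \<in> F" unfolding z_def using Fc x cpos by simp
      have xz: "x = c *\<^sub>R z" unfolding z_def using cpos by simp
      have "(c *\<^sub>R p) \<bullet> x - v x = c\<^sup>2 * (p \<bullet> z - v z)"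
        unfolding xz using vhom[OF z c] by (simp add: power2_eq_square algebra_simps)
      also have "\<dots> \<le> c\<^sup>2 * w p" using w_upper[OF z, of p] by (simp add: mult_left_mono)
      finally show "(c *\<^sub>R p) \<bullet> x - v x \<le> c\<^sup>2 * w p" .
    qed
    have "w p \<le> w (c *\<^sub>R p) / c\<^sup>2"
    proof (rule w_least)
      fix z assume z: "z \<in> F"
      have "(c *\<^sub>R p) \<bullet> (c *\<^sub>R z) - v (c *\<^sub>R z) \<le> w (c *\<^sub>R p)" using w_upper Fc[OF z c] by blast
      then have "c\<^sup>2 * (p \<bullet> z - v z) \<le> w (c *\<^sub>R p)"
        using vhom[OF z c] by (simp add: power2_eq_square algebra_simps)
      then show "p \<bullet> z - v z \<le> w (c *\<^sub>R p) / c\<^sup>2" using cpos by (simp add: field_simps)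
    qed
    then have "c\<^sup>2 * w p \<le> w (c *\<^sub>R p)" using cpos by (simp add: field_simps)
    then show ?thesis using le1 by simp
  qed
  have epiW: "epi W = (\<Inter>x\<in>F. {z. fst z \<bullet> x - v x \<le> snd z})"
  proof -
    have "W p \<le> ereal t \<longleftrightarrow> (\<forall>x\<in>F. p \<bullet> x - v x \<le> t)" for p t
      using w_upper w_least Ww[of p] by (auto intro: order_trans)
    then show ?thesis unfolding epi_def by auto
  qed
  have classW: "W \<in> classV"
    unfolding classV_def
  proof (intro CollectI conjI allI impI)
    show "closed (epi W)" unfolding epiW
      by (intro closed_INT ballI closed_Collect_le continuous_intros)
    show "convex (epi W)" unfolding epiW
    proof (intro convex_INT)
      fix x assume "x \<in> F"
      have "{z. fst z \<bullet> x - v x \<le> snd z} = {z. (x, -1::real) \<bullet> z \<le> v x}"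
        by (auto simp: inner_prod_def inner_commute)
      then show "convex {z. fst z \<bullet> x - v x \<le> snd z}" by (simp add: convex_halfspace_le)
    qed
    show "W 0 = 0" using Ww[of 0] w0 by (simp add: zero_ereal_def)
    show "0 \<le> W p" for p by (rule W_nonneg)
    show "W (c *\<^sub>R p) = ereal (c\<^sup>2) * W p" if "0 \<le> c" for c p
      using whom[OF that] Ww by simp
  qed
  have \<beta>pos: "\<beta> > 0" using ab by linarith
  have lowW: "\<delta>\<^sup>2 / (4 * \<beta>) * (norm p)\<^sup>2 \<le> w p" if p: "p \<in> G" for p
  proof -
    obtain x where x: "x \<in> F" "norm x \<le> 1" "\<delta> * norm p \<le> p \<bullet> x" using \<delta>(2)[OF p] by blast
    define t where "t = \<delta> * norm p / (2 * \<beta>)"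
    have t0: "t \<ge> 0" unfolding t_def using \<delta>(1) \<beta>pos by simp
    have "(norm x)\<^sup>2 \<le> 1" using x(2) by (simp add: power_le_one)
    then have "v x \<le> \<beta>" using vb(2)[OF x(1)] \<beta>pos
      by (metis mult_left_mono mult.right_neutral less_imp_le order_trans)
    have "t * (\<delta> * norm p) - t\<^sup>2 * \<beta> \<le> t * (p \<bullet> x) - t\<^sup>2 * v x"
      using x(3) \<open>v x \<le> \<beta>\<close> t0 by (simp add: mult_left_mono add_mono diff_mono)
    also have "\<dots> = p \<bullet> (t *\<^sub>R x) - v (t *\<^sub>R x)" using vhom[OF x(1) t0] by simp
    also have "\<dots> \<le> w p" using w_upper Fc[OF x(1) t0] by blast
    finally have "t * (\<delta> * norm p) - t\<^sup>2 * \<beta> \<le> w p" .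
    moreover have "t * (\<delta> * norm p) - t\<^sup>2 * \<beta> = \<delta>\<^sup>2 / (4 * \<beta>) * (norm p)\<^sup>2"
      unfolding t_def using \<beta>pos by (simp add: field_simps power2_eq_square)
    ultimately show ?thesis by simp
  qed
  have posW: "pos_def_wrt W G"
    unfolding pos_def_wrt_def
  proof (intro exI conjI ballI)
    let ?a = "min (\<delta>\<^sup>2 / (4 * \<beta>)) (1 / (4 * \<alpha>))"
    show "0 < ?a" using \<delta>(1) \<beta>pos ab(1) by simp
    show "?a \<le> 1 / (4 * \<alpha>)" by simp
    fix p assume p: "p \<in> G"
    have "?a * (norm p)\<^sup>2 \<le> \<delta>\<^sup>2 / (4 * \<beta>) * (norm p)\<^sup>2" by (intro mult_right_mono) auto
    then show "ereal (?a * (norm p)\<^sup>2) \<le> W p" using lowW[OF p] Ww[of p] by simp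
    show "W p \<le> ereal (1 / (4 * \<alpha>) * (norm p)\<^sup>2)" using W_bound[of p] by simp
  qed
  have decW: "w q \<le> \<gamma> * w p" if q: "q \<in> pos_dual H p" for p q
  proof (rule w_least)
    fix x assume x: "x \<in> F"
    obtain y where y: "y \<in> F" "y \<in> H x" "V y \<le> ereal \<gamma> * V x" using g(3)[OF x] by blast
    have vy: "v y \<le> \<gamma> * v x" using y(3) Vv[OF x] Vv[OF y(1)] by simp
    have qp: "q \<bullet> x \<le> p \<bullet> y" using q y(2) unfolding pos_dual_def graph_sv_def by auto
    define z where "z = inverse \<gamma> *\<^sub>R y"
    have gi: "inverse \<gamma> \<ge> 0" using g(1) by simp
    have "p \<bullet> z - v z \<le> w p" using w_upper Fc[OF y(1) gi] unfolding z_def by blast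
    moreover have "p \<bullet> z - v z = (p \<bullet> y) / \<gamma> - v y / \<gamma>\<^sup>2"
      unfolding z_def using vhom[OF y(1) gi] by (simp add: field_simps power2_eq_square)
    ultimately have "\<gamma> * ((p \<bullet> y) / \<gamma> - v y / \<gamma>\<^sup>2) \<le> \<gamma> * w p"
      using g(1) by (simp add: mult_left_mono)
    moreover have "\<gamma> * ((p \<bullet> y) / \<gamma> - v y / \<gamma>\<^sup>2) = p \<bullet> y - v y / \<gamma>"
      using g(1) by (simp add: field_simps power2_eq_square)
    moreover have "v y / \<gamma> \<le> v x" using vy g(1) by (simp add: field_simps)
    ultimately show "q \<bullet> x - v x \<le> \<gamma> * w p" using qp by linarith
  qed
  have "strong_lyapunov W (pos_dual H)"
    unfolding strong_lyapunov_def
  proof (intro conjI exI[of _ \<gamma>] ballI)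
    show "W \<in> classV" by (rule classW)
    show "pos_def_wrt W (feas (pos_dual H))" using posW unfolding G_def .
    show "0 < \<gamma>" "\<gamma> < 1" using g by auto
    fix p q assume "q \<in> feas (pos_dual H) \<inter> pos_dual H p"
    then have "w q \<le> \<gamma> * w p" using decW by blast
    then show "W q \<le> ereal \<gamma> * W p" using Ww by simp
  qed
  then show ?thesis unfolding W_def F_def .
qed

end
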